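(* Let $\alpha\in(0,\tfrac12)$ and $0<X_B\le X_A$. If player $B$ pre-commits any $p\in[0,X_B]$ to battlefield $b=2$, then $$u_B(p)<\min\{\pi_B(\sigma):\sigma\in(0,\infty),\ S(\sigma)=0\}.$$
   Context: Two-battlefield asymmetric setting $\mathrm{GGL}(X_A,X_B,\alpha)$: valuations $v_{A,1}=\alpha$, $v_{A,2}=1-\alpha$, $v_{B,1}=1-\alpha$, $v_{B,2}=\alpha$, budgets $X_A,X_B>0$. Define, for $x,y\ge0$, $L(x,y)=\frac{x}{2y}$ if $0\le x\le y$, $y>0$; $L(x,y)=1-\frac{y}{2x}$ if $x>y\ge0$; $L(0,0)=\tfrac12$. Let $c=\frac{(1-\alpha)^2}{\alpha}+\frac{\alpha^2}{1-\alpha}$, $r=X_A/X_B$, and $S:(0,\infty)\to\mathbb R$: $S(\sigma)=\sigma^2(c\sigma-r)$ on $(0,\frac{\alpha}{1-\alpha})$; $S(\sigma)=\frac{\alpha^2}{1-\alpha}(\sigma^3-r)+\alpha\sigma(1-r\sigma)$ on $[\frac{\alpha}{1-\alpha},\frac{1-\alpha}{\alpha})$; $S(\sigma)=\sigma-rc$ on $[\frac{1-\alpha}{\alpha},\infty)$. The equilibrium payoff of $B$ associated with a zero $\sigma$ of $S$ is $\pi_B(\sigma)=1-\frac{\sigma}{2}$ if $\sigma\in(0,\frac{\alpha}{1-\alpha})$; $\pi_B(\sigma)=1-\alpha-\frac{\alpha\sigma}{2}+\frac{\alpha^2}{2\sigma(1-\alpha)}$ if $\sigma\in[\frac{\alpha}{1-\alpha},\frac{1-\alpha}{\alpha})$;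 $\pi_B(\sigma)=\frac{c}{2\sigma}$ if $\sigma\ge\frac{1-\alpha}{\alpha}$. Pre-commitment: $B$ places $p\in[0,X_B]$ on one battlefield $b\in\{1,2\}$. Then $u_A^{M}(p)=v_{A,b}+(1-v_{A,b})L(X_A-p,X_B-p)$ (for $p\le X_A$) and $u_A^{W}(p)=(1-v_{A,b})L(X_A,X_B-p)$. Player $A$'s response is $\mathtt A_b(p)=\mathtt M$ if $p\le X_A$ and $u_A^M(p)>u_A^W(p)$, and $\mathtt A_b(p)=\mathtt W$ otherwise. Player $B$'s payoff is $u_B(p)=(1-v_{B,b})L(X_B-p,X_A-p)$ if $\mathtt A_b(p)=\mathtt M$, and $u_B(p)=v_{B,b}+(1-v_{B,b})L(X_B-p,X_A)$ if $\mathtt A_b(p)=\mathtt W$. *)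

theory Defs
  imports Complex_Main
begin

text \<open>Tie-breaking contest function L(x,y), meant for x, y \<ge> 0.\<close>
definition L :: "real \<Rightarrow> real \<Rightarrow> real" where
  "L x y = (if x = 0 \<and> y = 0 then 1/2
            else if x \<le> y then x / (2 * y)
            else 1 - y / (2 * x))"

text \<open>Valuations in GGL(X_A, X_B, alpha); battlefields are 1 and 2.\<close>
definition vA :: "real \<Rightarrow> nat \<Rightarrow> real" where
  "vA \<alpha> b = (if b = 1 then \<alpha> else 1 - \<alpha>)"

definition vB :: "real \<Rightarrow> nat \<Rightarrow> real" where
  "vB \<alpha> b = (if b = 1 then 1 - \<alpha> else \<alpha>)"

definition cc :: "real \<Rightarrow> real" where
  "cc \<alpha> = (1 - \<alpha>)^2 / \<alpha> + \<alpha>^2 / (1 - \<alpha>)"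

definition S :: "real \<Rightarrow> real \<Rightarrow> real \<Rightarrow> real \<Rightarrow> real" where
  "S \<alpha> XA XB \<sigma> =
     (let r = XA / XB in
      if \<sigma> < \<alpha> / (1 - \<alpha>) then \<sigma>^2 * (cc \<alpha> * \<sigma> - r)
      else if \<sigma> < (1 - \<alpha>) / \<alpha> then
        \<alpha>^2 / (1 - \<alpha>) * (\<sigma>^3 - r) + \<alpha> * \<sigma> * (1 - r * \<sigma>)
      else \<sigma> - r * cc \<alpha>)"

definition piB :: "real \<Rightarrow> real \<Rightarrow> real" where
  "piB \<alpha> \<sigma> =
     (if \<sigma> < \<alpha> / (1 - \<alpha>) then 1 - \<sigma> / 2
      else if \<sigma> < (1 - \<alpha>) / \<alpha> then
        1 - \<alpha> - \<alpha> * \<sigma> / 2 + \<alpha>^2 / (2 * \<sigma> * (1 - \<alpha>))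
      else cc \<alpha> / (2 * \<sigma>))"

definition uAM :: "real \<Rightarrow> real \<Rightarrow> real \<Rightarrow> nat \<Rightarrow> real \<Rightarrow> real" where
  "uAM \<alpha> XA XB b p = vA \<alpha> b + (1 - vA \<alpha> b) * L (XA - p) (XB - p)"

definition uAW :: "real \<Rightarrow> real \<Rightarrow> real \<Rightarrow> nat \<Rightarrow> real \<Rightarrow> real" where
  "uAW \<alpha> XA XB b p = (1 - vA \<alpha> b) * L XA (XB - p)"

text \<open>A's response: True means M (match), False means W (withdraw).\<close>
definition respM :: "real \<Rightarrow> real \<Rightarrow> real \<Rightarrow> nat \<Rightarrow> real \<Rightarrow> bool" where
  "respM \<alpha> XA XB b p \<longleftrightarrow> p \<le> XA \<and> uAM \<alpha> XA XB b p > uAW \<alpha> XA XB b p"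

definition uB :: "real \<Rightarrow> real \<Rightarrow> real \<Rightarrow> nat \<Rightarrow> real \<Rightarrow> real" where
  "uB \<alpha> XA XB b p =
     (if respM \<alpha> XA XB b p then (1 - vB \<alpha> b) * L (XB - p) (XA - p)
      else vB \<alpha> b + (1 - vB \<alpha> b) * L (XB - p) XA)"

end

theory Submission imports Defs "HOL-Computational_Algebra.Polynomial" begin

lemma uB_bound:
  fixes a XA XB p :: real
  assumes "0 < a" "a < 1/2" "0 < XB" "XB \<le> XA" "0 \<le> p" "p \<le> XB"
  shows "uB a XA XB 2 p < XB / (2*XA)"
proof -
  have L01: "0 \<le> L x y" if "0 \<le> x" "0 \<le> y" for x y
    using that unfolding L_def by (auto simp: field_simps)
  have Lle1: "L XA (XB - p) \<le> 1"
    using assms unfolding L_def by (auto simp: field_simps)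
  have resp: "respM a XA XB 2 p"
  proof -
    have "uAW a XA XB 2 p \<le> a" unfolding uAW_def vA_def using Lle1 assms
      by (simp add: mult_left_le)
    moreover have "uAM a XA XB 2 p \<ge> 1 - a" unfolding uAM_def vA_def
      using L01[of "XA - p" "XB - p"] assms by simp
    ultimately show ?thesis unfolding respM_def using assms by auto
  qed
  have Lb: "L (XB - p) (XA - p) \<le> XB / (2*XA)"
  proof (cases "XB - p = 0 \<and> XA - p = 0")
    case True then show ?thesis using assms by (simp add: L_def)
  next
    case False
    hence pos: "XA - p > 0" using assms by auto
    have "L (XB - p) (XA - p) = (XB - p) / (2*(XA - p))" using False assms unfolding L_def by auto
    also have "\<dots> \<le> XB / (2*XA)"
    proof -
      have k: "p * XB \<le> p * XA" using assms by (intro mult_left_mono) auto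
      show ?thesis using pos assms k by (simp add: field_simps)
    qed
    finally show ?thesis .
  qed
  have "uB a XA XB 2 p = (1 - a) * L (XB - p) (XA - p)"
    using resp unfolding uB_def vB_def by simp
  also have "\<dots> \<le> (1 - a) * (XB / (2*XA))" using Lb assms by (intro mult_left_mono) auto
  also have "\<dots> < XB / (2*XA)" using assms by (simp add: field_simps)
  finally show ?thesis .
qed

lemma cc_pos: "0 < a \<Longrightarrow> a < 1/2 \<Longrightarrow> 0 < cc (a::real)"
  unfolding cc_def by (intro add_pos_pos divide_pos_pos) auto

lemma cck1: assumes "0 < a" "a < 1/2" shows "cc a * (a/(1-a)) < (1::real)"
proof -
  have e: "cc a * (a/(1-a)) = (1-a) + a^3/(1-a)^2"
  proof -
    have g: "(u^2/a + a^2/u) * (a/u) = u + a^3/u^2" if "u > 0" for u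
      using that assms by (simp add: field_simps power2_eq_square power3_eq_cube)
    show ?thesis using g[of "1-a"] assms unfolding cc_def by simp
  qed
  have "a*a < (1-a)*(1-a)" using assms by (intro mult_strict_mono) auto
  hence "a^3 < a * (1-a)^2" using assms by (simp add: power2_eq_square power3_eq_cube)
  hence "a^3/(1-a)^2 < a" using assms by (simp add: divide_simps)
  thus ?thesis using e by simp
qed

lemma zero_bound:
  fixes a XA XB \<sigma> :: real
  assumes "0 < a" "a < 1/2" "0 < XB" "XB \<le> XA" "0 < \<sigma>" "S a XA XB \<sigma> = 0"
  shows "XB / (2*XA) \<le> piB a \<sigma>"
proof -
  define r where "r = XA / XB"
  define u where "u = 1 - a"
  have r1: "r \<ge> 1" using assms unfolding r_def by simp
  have u: "u > a" "a > 0" "u > 0" using assms unfolding u_def by auto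
  have cp: "cc a > 0" using cc_pos assms by auto
  have XBr: "XB / XA = 1 / r" unfolding r_def by simp
  consider (A) "\<sigma> < a/(1-a)" | (B) "a/(1-a) \<le> \<sigma>" "\<sigma> < (1-a)/a" | (C) "\<sigma> \<ge> (1-a)/a" by linarith
  then show ?thesis
  proof cases
    case A
    hence "\<sigma>^2 * (cc a * \<sigma> - r) = 0" using assms(6) unfolding S_def r_def Let_def by simp
    hence "cc a * \<sigma> = r" using assms by simp
    moreover have "cc a * \<sigma> < cc a * (a/(1-a))" using mult_strict_left_mono[OF A cp] .
    ultimately show ?thesis using cck1[OF assms(1,2)] r1 by linarith
  next
    case C
    have "a/(1-a) < 1" "1 < (1-a)/a" using assms by (simp_all add: field_simps)
    hence "\<not> \<sigma> < a/(1-a)" using C by linarith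
    hence "\<sigma> = r * cc a" using C assms(6) unfolding S_def r_def Let_def by auto
    hence "piB a \<sigma> = 1 / (2*r)" using C \<open>\<not> \<sigma> < a/(1-a)\<close> cp r1 unfolding piB_def by auto
    thus ?thesis using XBr by simp
  next
    case B
    have eq: "a^2/(1-a) * (\<sigma>^3 - r) + a * \<sigma> * (1 - r * \<sigma>) = 0"
      using B assms(6) unfolding S_def r_def Let_def by auto
    have eq2: "r * (a + u*\<sigma>^2) = a*\<sigma>^3 + u*\<sigma>"
    proof -
      have nz: "1 - a \<noteq> 0" using u unfolding u_def by simp
      have f: "a^2/(1-a) * (\<sigma>^3 - r) + a*\<sigma>*(1 - r*\<sigma>) = (a/u) * (a*(\<sigma>^3 - r) + u*\<sigma>*(1 - r*\<sigma>))"
        unfolding u_def using nz by (simp add: field_simps power2_eq_square)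
      have "a/u \<noteq> 0" using u by simp
      hence h: "a*(\<sigma>^3 - r) + u*\<sigma>*(1 - r*\<sigma>) = 0" using f eq by simp
      have "r * (a + u*\<sigma>^2) - (a*\<sigma>^3 + u*\<sigma>) = - (a*(\<sigma>^3 - r) + u*\<sigma>*(1 - r*\<sigma>))"
        by (simp add: algebra_simps power2_eq_square)
      thus ?thesis using h by linarith
    qed
    have d1: "a + u*\<sigma>^2 > 0" using u by (simp add: add_pos_nonneg)
    have Q: "a*\<sigma>^3 - u*\<sigma>^2 + u*\<sigma> - a \<ge> 0"
    proof -
      have "a*\<sigma>^3 - u*\<sigma>^2 + u*\<sigma> - a = (r - 1) * (a + u*\<sigma>^2)" using eq2 by (simp add: algebra_simps)
      thus ?thesis using r1 d1 by simp
    qed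
    have sk: "a * \<sigma> < u" using B u unfolding u_def by (simp add: field_simps)
    define N where "N = 2*\<sigma>*u^2 - a*u*\<sigma>^2 + a^2"
    define D where "D = 2*\<sigma>*u*(a*\<sigma>^2+u)"
    have Dp: "D > 0" unfolding D_def using u assms(5) by (intro mult_pos_pos add_pos_pos) auto
    have pi: "piB a \<sigma> = N * (a*\<sigma>^2+u) / D"
    proof -
      have "\<not> \<sigma> < a/(1-a)" "\<sigma> < (1-a)/a" using B by auto
      hence p1: "piB a \<sigma> = u - a * \<sigma> / 2 + a^2 / (2 * \<sigma> * u)" unfolding piB_def u_def by simp
      have p2: "u - a * \<sigma> / 2 + a^2 / (2 * \<sigma> * u) = N / (2*\<sigma>*u)"
        unfolding N_def using u assms(5) by (simp add: field_simps power2_eq_square)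
      have nz0: "a*\<sigma>^2+u > 0" using u by (intro add_nonneg_pos mult_nonneg_nonneg) auto
      hence nz: "a*\<sigma>^2+u \<noteq> 0" by simp
      have p3: "N * (a*\<sigma>^2+u) / D = N / (2*\<sigma>*u)" unfolding D_def using nz by simp
      show ?thesis using p1 p2 p3 by simp
    qed
    have lhs: "XB / (2*XA) = u*(a+u*\<sigma>^2) / D"
    proof -
      have "XB / (2*XA) = 1/(2*r)" using XBr by simp
      also have "\<dots> = (a + u*\<sigma>^2) / (2*(a*\<sigma>^3 + u*\<sigma>))"
      proof -
        have "a*\<sigma>^3 + u*\<sigma> > 0" using eq2 d1 r1 by (metis mult_pos_pos less_le_trans zero_less_one)
        thus ?thesis using eq2 d1 r1 by (simp add: field_simps)
      qed
      also have "\<dots> = u*(a+u*\<sigma>^2) / D"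
      proof -
        have "D = u*(2*(a*\<sigma>^3+u*\<sigma>))" unfolding D_def by (simp add: algebra_simps power2_eq_square power3_eq_cube)
        thus ?thesis using u by simp
      qed
      finally show ?thesis .
    qed
    have P: "N * (a*\<sigma>^2+u) - u*(a+u*\<sigma>^2) = (u - a*\<sigma>) * (u * (a*\<sigma>^3 - u*\<sigma>^2 + u*\<sigma> - a) + \<sigma>*(u^2 - a^2))"
      unfolding N_def u_def by (simp add: algebra_simps power2_eq_square power3_eq_cube)
    have "u^2 - a^2 \<ge> 0" using u by (simp add: power_mono)
    hence "(u - a*\<sigma>) * (u * (a*\<sigma>^3 - u*\<sigma>^2 + u*\<sigma> - a) + \<sigma>*(u^2 - a^2)) \<ge> 0"
      using sk Q u assms(5) by (intro mult_nonneg_nonneg add_nonneg_nonneg) auto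
    hence "u*(a+u*\<sigma>^2) \<le> N * (a*\<sigma>^2+u)" using P by linarith
    hence "u*(a+u*\<sigma>^2) / D \<le> N * (a*\<sigma>^2+u) / D" using Dp by (simp add: divide_right_mono)
    thus ?thesis using pi lhs by simp
  qed
qed

lemma exists_zero:
  fixes a XA XB :: real
  assumes "0 < a" "a < 1/2" "0 < XB" "XB \<le> XA"
  shows "\<exists>\<sigma>. \<sigma> > 0 \<and> S a XA XB \<sigma> = 0"
proof -
  define r where "r = XA / XB"
  define u where "u = 1 - a"
  have r1: "r \<ge> 1" using assms unfolding r_def by simp
  have u: "u > a" "a > 0" "u > 0" "a + u = 1" using assms unfolding u_def by auto
  have cp: "cc a > 0" using cc_pos assms by auto
  have ccu: "cc a = u^2/a + a^2/u" unfolding cc_def u_def ..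
  have k12: "a/u < 1" "1 < u/a" using u by (simp_all add: field_simps)
  show ?thesis
  proof (cases "r * cc a \<ge> u/a")
    case True
    have "S a XA XB (r * cc a) = 0" using True k12 unfolding S_def Let_def r_def[symmetric] u_def[symmetric]
      by auto
    moreover have "r * cc a > 0" using r1 cp by simp
    ultimately show ?thesis by blast
  next
    case False
    define f where "f = (\<lambda>\<sigma>::real. a^2/u * (\<sigma>^3 - r) + a*\<sigma>*(1 - r*\<sigma>))"
    define k1 where "k1 = a/u"
    define k2 where "k2 = u/a"
    have k1p: "0 < k1" "k1 < 1" using u k12 unfolding k1_def by auto
    have "f k1 = a^2/u * (k1^3 - k1 + (1+k1)*(1 - r))"
      unfolding f_def k1_def using u(1-3) by (simp add: field_simps power2_eq_square power3_eq_cube)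
    moreover have "k1^3 - k1 < 0"
    proof -
      have "k1^2 < 1" using k1p by (simp add: power_less_one_iff abs_less_iff)
      hence "k1 * k1^2 < k1 * 1" using k1p by (intro mult_strict_left_mono) auto
      thus ?thesis by (simp add: power2_eq_square power3_eq_cube)
    qed
    moreover have "(1+k1)*(1 - r) \<le> 0" using k1p r1 by (intro mult_nonneg_nonpos) auto
    moreover have "a^2/u > 0" using u by simp
    ultimately have fk1: "f k1 < 0"
      by (metis add_neg_nonpos diff_less_0_iff_less mult_pos_neg times_divide_eq_left mult.commute)
    have "f k2 = u*(u+a)/a - r*(u^2/a + a^2/u)"
      unfolding f_def k2_def using u(1-3) by (simp add: field_simps power2_eq_square power3_eq_cube)
    moreover have "u*(u+a)/a = u/a" using u(4) by (simp add: add.commute)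
    ultimately have fk2: "f k2 > 0" using False ccu unfolding k2_def by simp
    have "k1 \<le> k2" using k12 unfolding k1_def k2_def by simp
    moreover have "\<forall>x. k1 \<le> x \<and> x \<le> k2 \<longrightarrow> isCont f x" unfolding f_def using u(3) by (auto intro!: continuous_intros)
    ultimately obtain x where x: "k1 \<le> x" "x \<le> k2" "f x = 0"
      using IVT[of f k1 0 k2] fk1 fk2 by auto
    have "x \<noteq> k2" using x fk2 by auto
    hence "x < u/a" "\<not> x < a/u" using x unfolding k1_def k2_def by auto
    hence "S a XA XB x = f x" unfolding S_def Let_def f_def r_def[symmetric] u_def[symmetric] by simp
    moreover have "x > 0" using x k1p by simp
    ultimately show ?thesis using x by auto
  qed
qed

lemma finite_zeros:
  fixes a XA XB :: real
  assumes "0 < a" "a < 1/2" "0 < XB" "XB \<le> XA"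
  shows "finite {\<sigma>. \<sigma> > 0 \<and> S a XA XB \<sigma> = 0}"
proof -
  define r where "r = XA / XB"
  define u where "u = 1 - a"
  define P where "P = [:-(a^2/u*r), a, -(a*r), a^2/u:]"
  have u: "u > 0" using assms unfolding u_def by simp
  have cp: "cc a > 0" using cc_pos assms by auto
  have "coeff P 3 \<noteq> 0" unfolding P_def using u assms by (simp add: numeral_3_eq_3)
  hence "P \<noteq> 0" by auto
  hence fin: "finite {\<sigma>. poly P \<sigma> = 0}" by (rule poly_roots_finite)
  have "{\<sigma>. \<sigma> > 0 \<and> S a XA XB \<sigma> = 0} \<subseteq> {r / cc a, r * cc a} \<union> {\<sigma>. poly P \<sigma> = 0}"
  proof
    fix \<sigma> assume "\<sigma> \<in> {\<sigma>. \<sigma> > 0 \<and> S a XA XB \<sigma> = 0}"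
    hence s: "\<sigma> > 0" "S a XA XB \<sigma> = 0" by auto
    consider (A) "\<sigma> < a/u" | (B) "\<not> \<sigma> < a/u" "\<sigma> < u/a" | (C) "\<not> \<sigma> < a/u" "\<not> \<sigma> < u/a" by blast
    then show "\<sigma> \<in> {r / cc a, r * cc a} \<union> {\<sigma>. poly P \<sigma> = 0}"
    proof cases
      case A
      hence "\<sigma>^2 * (cc a * \<sigma> - r) = 0" using s unfolding S_def Let_def r_def[symmetric] u_def[symmetric] by simp
      hence "cc a * \<sigma> = r" using s by simp
      hence "\<sigma> = r / cc a" using cp by (simp add: field_simps)
      thus ?thesis by simp
    next
      case C
      hence "\<sigma> - r * cc a = 0" using s unfolding S_def Let_def r_def[symmetric] u_def[symmetric] by simp
      thus ?thesis by simp
    next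
      case B
      hence e: "a^2/u * (\<sigma>^3 - r) + a*\<sigma>*(1 - r*\<sigma>) = 0"
        using s unfolding S_def Let_def r_def[symmetric] u_def[symmetric] by simp
      have "poly P \<sigma> = a^2/u * (\<sigma>^3 - r) + a*\<sigma>*(1 - r*\<sigma>)"
        unfolding P_def by (simp add: algebra_simps power2_eq_square power3_eq_cube)
      thus ?thesis using e by simp
    qed
  qed
  moreover have "finite ({r / cc a, r * cc a} \<union> {\<sigma>. poly P \<sigma> = 0})" using fin by simp
  ultimately show ?thesis by (rule finite_subset)
qed

theorem lemma3:
  fixes \<alpha> XA XB p :: real
  assumes "0 < \<alpha>" "\<alpha> < 1/2"
    and "0 < XB" "XB \<le> XA"
    and "0 \<le> p" "p \<le> XB"
  shows "\<exists>\<sigma>0. \<sigma>0 > 0 \<and> S \<alpha> XA XB \<sigma>0 = 0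
           \<and> (\<forall>\<sigma>. \<sigma> > 0 \<and> S \<alpha> XA XB \<sigma> = 0 \<longrightarrow> piB \<alpha> \<sigma>0 \<le> piB \<alpha> \<sigma>)
           \<and> uB \<alpha> XA XB 2 p < piB \<alpha> \<sigma>0"
proof -
  define Z where "Z = {\<sigma>. \<sigma> > 0 \<and> S \<alpha> XA XB \<sigma> = 0}"
  have fin: "finite Z" unfolding Z_def using finite_zeros assms by blast
  have ne: "Z \<noteq> {}" unfolding Z_def using exists_zero[OF assms(1-4)] by blast
  have "Min (piB \<alpha> ` Z) \<in> piB \<alpha> ` Z" using fin ne by (intro Min_in) auto
  then obtain \<sigma>0 where s0: "\<sigma>0 \<in> Z" "piB \<alpha> \<sigma>0 = Min (piB \<alpha> ` Z)" by auto
  have minle: "piB \<alpha> \<sigma>0 \<le> piB \<alpha> \<sigma>" if "\<sigma> \<in> Z" for \<sigma>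
    using s0 that fin by (simp add: Min_le)
  have "uB \<alpha> XA XB 2 p < XB / (2*XA)" using uB_bound assms by blast
  also have "\<dots> \<le> piB \<alpha> \<sigma>0" using zero_bound[OF assms(1-4)] s0 unfolding Z_def by blast
  finally show ?thesis using s0 minle unfolding Z_def by blast
qed

end
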